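(* Let $n\ge 1$ and $k\ge 2$ be integers and let $T=T^1\times\cdots\times T^n$ be a finite product space with $|T^j|=k$ for every $j$, so $|T|=k^n$. Let $D$ be the uniform distribution on $T$; in particular $D$ is a product distribution $D=D^1\times\cdots\times D^n$, each $D^j$ being uniform on $T^j$. Fix a constant $c$ with $0<c<0.017$. There is an absolute constant $C>0$ (independent of $n,k,m,\varepsilon$) such that for every $\varepsilon\in(0,1/2]$ and every positive integer $m< c\,k^n/\varepsilon^2$, if $S=\{s_1,\dots,s_m\}$ consists of $m$ i.i.d. samples from $D$, then \[\Pr_{S\sim D^m}\big[d_{\mathrm{TV}}(\mathrm{emp}(S),D)>\varepsilon\big]\ \ge\ 1-\frac{C}{k^n}.\]
   Context: For distributions $E,D$ on a finite set $T$, the total variation distance is $d_{\mathrm{TV}}(E,D)=\frac12\sum_{x\in T}|E(x)-D(x)|$, where $E(x)$ is the probability that $E$ assigns to $x$. For a sample multiset $S=\{s_1,\dots,s_m\}\subseteq T$, the empirical distribution is $\mathrm{emp}(S)=\frac1m\sum_{i=1}^m\delta_{s_i}$, where $\delta_s$ is the point mass at $s$; i.e. $\mathrm{emp}(S)(x)=\frac1m\#\{i: s_i=x\}$. *)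

theory Defs
  imports "HOL-Probability.Probability"
begin

definition emp :: "nat \<Rightarrow> (nat \<Rightarrow> 'b) \<Rightarrow> 'b \<Rightarrow> real" where
  "emp m s x = real (card {i \<in> {..<m}. s i = x}) / real m"

definition tv_dist :: "'b set \<Rightarrow> ('b \<Rightarrow> real) \<Rightarrow> ('b \<Rightarrow> real) \<Rightarrow> real" where
  "tv_dist T E D = (1/2) * (\<Sum>x\<in>T. \<bar>E x - D x\<bar>)"

end

theory Submission
  imports Defs
begin

lemma integral_pair_pmf_fin:
  fixes h :: "'a \<times> 'b \<Rightarrow> real"
  assumes "finite (set_pmf A)" "finite (set_pmf B)"
  shows "(\<integral>x. h x \<partial>pair_pmf A B) = (\<integral>b. (\<integral>a. h (a,b) \<partial>A) \<partial>B)"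
proof -
  have "(\<integral>x. h x \<partial>pair_pmf A B) = (\<Sum>x\<in>set_pmf A \<times> set_pmf B. h x * pmf (pair_pmf A B) x)"
    using assms by (intro integral_measure_pmf_real) auto
  also have "\<dots> = (\<Sum>a\<in>set_pmf A. \<Sum>b\<in>set_pmf B. h (a,b) * (pmf A a * pmf B b))"
    by (simp add: sum.cartesian_product) (intro sum.cong refl, auto simp: pmf_pair)
  also have "\<dots> = (\<Sum>b\<in>set_pmf B. (\<Sum>a\<in>set_pmf A. h (a,b) * pmf A a) * pmf B b)"
    by (subst sum.swap) (simp add: sum_distrib_right sum_distrib_left mult_ac)
  also have "\<dots> = (\<Sum>b\<in>set_pmf B. (\<integral>a. h (a,b) \<partial>A) * pmf B b)"
    using assms by (intro sum.cong refl) (subst integral_measure_pmf_real[where A="set_pmf A"], auto)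
  also have "\<dots> = (\<integral>b. (\<integral>a. h (a,b) \<partial>A) \<partial>B)"
    using assms by (intro integral_measure_pmf_real[symmetric]) auto
  finally show ?thesis .
qed

lemma fin_Pi_pmf:
  assumes "finite (set_pmf D)"
  shows "finite (set_pmf (Pi_pmf {..<m::nat} d (\<lambda>_. D)))"
proof -
  have "set_pmf (Pi_pmf {..<m} d (\<lambda>_. D)) = PiE_dflt {..<m} d (set_pmf \<circ> (\<lambda>_. D))"
    by (rule set_Pi_pmf) simp
  then show ?thesis using assms by (simp add: finite_PiE_dflt)
qed

lemma Pi_pmf_step:
  fixes h :: "(nat \<Rightarrow> 'a) \<Rightarrow> real"
  assumes "finite (set_pmf D)"
  shows "(\<integral>S. h S \<partial>Pi_pmf {..<Suc m} d (\<lambda>_. D))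
        = (\<integral>S. (\<integral>y. h (S(m:=y)) \<partial>D) \<partial>Pi_pmf {..<m} d (\<lambda>_. D))"
proof -
  have e: "{..<Suc m} = insert m {..<m}" by auto
  show ?thesis
    unfolding e
    by (subst Pi_pmf_insert) (auto simp: integral_pair_pmf_fin assms fin_Pi_pmf)
qed

lemma abs_integral_le_fin:
  fixes u :: "'a \<Rightarrow> real"
  assumes "finite (set_pmf D)" "\<And>y. \<bar>u y\<bar> \<le> c"
  shows "\<bar>\<integral>y. u y \<partial>D\<bar> \<le> c"
proof -
  have "\<bar>\<integral>y. u y \<partial>D\<bar> \<le> (\<integral>y. \<bar>u y\<bar> \<partial>D)"
    by (rule integral_abs_bound)
  also have "\<dots> \<le> (\<integral>y. c \<partial>D)"
    using assms by (intro integral_mono integrable_measure_pmf_finite) auto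
  also have "\<dots> = c" by simp
  finally show ?thesis .
qed

lemma sq_decomp:
  fixes h :: "'a \<Rightarrow> real"
  assumes "finite (set_pmf D)"
  shows "(\<integral>y. (h y - \<mu>)\<^sup>2 \<partial>D) = (\<integral>y. (h y - (\<integral>y. h y \<partial>D))\<^sup>2 \<partial>D) + ((\<integral>y. h y \<partial>D) - \<mu>)\<^sup>2"
  using assms
  by (simp add: power2_diff integrable_measure_pmf_finite integral_diff integral_add power2_eq_square algebra_simps)

lemma var_bound:
  fixes f :: "(nat \<Rightarrow> 'a) \<Rightarrow> real"
  assumes fin: "finite (set_pmf D)" and c: "c \<ge> 0"
   and bd: "\<forall>S i y. i < m \<longrightarrow> \<bar>f (S(i:=y)) - f S\<bar> \<le> c"
  shows "(\<integral>S. (f S - (\<integral>S. f S \<partial>Pi_pmf {..<m} d (\<lambda>_. D)))\<^sup>2 \<partial>Pi_pmf {..<m} d (\<lambda>_. D)) \<le> real m * c\<^sup>2"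
  using bd
proof (induction m arbitrary: f)
  case 0
  then show ?case by simp
next
  case (Suc m)
  let ?P = "Pi_pmf {..<m} d (\<lambda>_. D)"
  define g where "g S = (\<integral>y. f (S(m:=y)) \<partial>D)" for S
  define \<mu> where "\<mu> = (\<integral>S. f S \<partial>Pi_pmf {..<Suc m} d (\<lambda>_. D))"
  have mu: "\<mu> = (\<integral>S. g S \<partial>?P)"
    unfolding \<mu>_def g_def by (rule Pi_pmf_step[OF fin])
  have gbd: "\<forall>S i y. i < m \<longrightarrow> \<bar>g (S(i:=y)) - g S\<bar> \<le> c"
  proof (intro allI impI)
    fix S i y assume i: "i < m"
    have "g (S(i:=y)) - g S = (\<integral>y'. f ((S(m:=y'))(i:=y)) - f (S(m:=y')) \<partial>D)"
    proof -
      have "\<And>y'. (S(m:=y'))(i:=y) = (S(i:=y))(m:=y')" using i by (simp add: fun_upd_twist)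
      then show ?thesis unfolding g_def
        by (simp add: integral_diff fin integrable_measure_pmf_finite)
    qed
    also have "\<bar>\<dots>\<bar> \<le> c"
      using Suc.prems i by (intro abs_integral_le_fin fin) (meson less_SucI)
    finally show "\<bar>g (S(i:=y)) - g S\<bar> \<le> c" .
  qed
  have inner: "(\<integral>y. (f (S(m:=y)) - \<mu>)\<^sup>2 \<partial>D) \<le> c\<^sup>2 + (g S - \<mu>)\<^sup>2" for S
  proof -
    have pt: "(f (S(m:=y)) - g S)\<^sup>2 \<le> c\<^sup>2" for y
    proof -
      have "g S - f (S(m:=y)) = (\<integral>y'. f ((S(m:=y))(m:=y')) - f (S(m:=y)) \<partial>D)"
        unfolding g_def
        by (simp add: integral_diff fin integrable_measure_pmf_finite)
      also have "\<bar>\<dots>\<bar> \<le> c"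
        using Suc.prems by (intro abs_integral_le_fin fin) (meson lessI)
      finally have "\<bar>f (S(m:=y)) - g S\<bar> \<le> c" by simp
      then show ?thesis using c
        by (metis abs_ge_zero abs_le_square_iff abs_of_nonneg)
    qed
    have "(\<integral>y. (f (S(m:=y)) - \<mu>)\<^sup>2 \<partial>D) = (\<integral>y. (f (S(m:=y)) - g S)\<^sup>2 \<partial>D) + (g S - \<mu>)\<^sup>2"
      unfolding g_def by (rule sq_decomp[OF fin])
    also have "(\<integral>y. (f (S(m:=y)) - g S)\<^sup>2 \<partial>D) \<le> (\<integral>y. c\<^sup>2 \<partial>D)"
      using pt by (intro integral_mono integrable_measure_pmf_finite fin) auto
    finally show ?thesis by simp
  qed
  have "(\<integral>S. (f S - \<mu>)\<^sup>2 \<partial>Pi_pmf {..<Suc m} d (\<lambda>_. D))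
      = (\<integral>S. (\<integral>y. (f (S(m:=y)) - \<mu>)\<^sup>2 \<partial>D) \<partial>?P)"
    by (rule Pi_pmf_step[OF fin])
  also have "\<dots> \<le> (\<integral>S. c\<^sup>2 + (g S - \<mu>)\<^sup>2 \<partial>?P)"
    using inner by (intro integral_mono integrable_measure_pmf_finite fin_Pi_pmf fin) auto
  also have "\<dots> = c\<^sup>2 + (\<integral>S. (g S - \<mu>)\<^sup>2 \<partial>?P)"
    by (simp add: integral_add integrable_measure_pmf_finite fin_Pi_pmf fin)
  also have "(\<integral>S. (g S - \<mu>)\<^sup>2 \<partial>?P) \<le> real m * c\<^sup>2"
    unfolding mu using Suc.IH[OF gbd] .
  finally show ?case unfolding \<mu>_def by (simp add: algebra_simps)
qed


lemma sum_upd_Suc: "(\<Sum>i<Suc m. z ((S(m:=y)) i)) = (\<Sum>i<m. z (S i)) + z y"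
  by (simp add: sum.lessThan_Suc)

lemma moments:
  fixes z :: "'a \<Rightarrow> real"
  assumes fin: "finite (set_pmf D)" and z1: "(\<integral>y. z y \<partial>D) = 0"
    and z2: "(\<integral>y. (z y)\<^sup>2 \<partial>D) = v" and z4: "(\<integral>y. (z y)^4 \<partial>D) \<le> v"
  shows "(\<integral>S. (\<Sum>i<m. z (S i)) \<partial>Pi_pmf {..<m} d (\<lambda>_. D)) = 0 \<and>
         (\<integral>S. (\<Sum>i<m. z (S i))\<^sup>2 \<partial>Pi_pmf {..<m} d (\<lambda>_. D)) = real m * v \<and>
         (\<integral>S. (\<Sum>i<m. z (S i))^4 \<partial>Pi_pmf {..<m} d (\<lambda>_. D)) \<le> real m * v + 3 * (real m)\<^sup>2 * v\<^sup>2"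
proof (induction m)
  case 0
  then show ?case by simp
next
  case (Suc m)
  let ?P = "Pi_pmf {..<m} d (\<lambda>_. D)"
  let ?Y = "\<lambda>S. (\<Sum>i<m. z (S i))"
  have int: "integrable D h" for h :: "'a \<Rightarrow> real" by (rule integrable_measure_pmf_finite[OF fin])
  have intP: "integrable ?P h" for h :: "(nat \<Rightarrow> 'a) \<Rightarrow> real"
    by (rule integrable_measure_pmf_finite[OF fin_Pi_pmf[OF fin]])
  have v0: "v \<ge> 0" unfolding z2[symmetric] by (intro integral_nonneg_AE) simp
  have i1: "(\<integral>y. a + z y \<partial>D) = a" for a
    using z1 by (simp add: integral_add int)
  have i2: "(\<integral>y. (a + z y)\<^sup>2 \<partial>D) = a\<^sup>2 + v" for a
  proof -
    have e: "(a + z y)\<^sup>2 = a\<^sup>2 + 2 * a * z y + (z y)\<^sup>2" for y by (simp add: power2_sum)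
    show ?thesis unfolding e using z1 z2 by (simp add: integral_add int)
  qed
  have i4: "(\<integral>y. (a + z y)^4 \<partial>D) = a^4 + 6 * a\<^sup>2 * v + 4 * a * (\<integral>y. (z y)^3 \<partial>D) + (\<integral>y. (z y)^4 \<partial>D)" for a
  proof -
    have e: "(a + z y)^4 = a^4 + 4 * a^3 * z y + 6 * a\<^sup>2 * (z y)\<^sup>2 + 4 * a * (z y)^3 + (z y)^4" for y
      by (simp add: eval_nat_numeral algebra_simps)
    show ?thesis unfolding e using z1 z2 by (simp add: integral_add int)
  qed
  have m1: "(\<integral>S. ?Y S \<partial>?P) = 0" and m2: "(\<integral>S. (?Y S)\<^sup>2 \<partial>?P) = real m * v"
    and m4: "(\<integral>S. (?Y S)^4 \<partial>?P) \<le> real m * v + 3 * (real m)\<^sup>2 * v\<^sup>2"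
    using Suc.IH by auto
  have A1: "(\<integral>S. (\<Sum>i<Suc m. z (S i)) \<partial>Pi_pmf {..<Suc m} d (\<lambda>_. D)) = (\<integral>S. ?Y S \<partial>?P)"
    by (subst Pi_pmf_step[OF fin]) (simp add: sum_upd_Suc i1)
  have A2: "(\<integral>S. (\<Sum>i<Suc m. z (S i))\<^sup>2 \<partial>Pi_pmf {..<Suc m} d (\<lambda>_. D)) = (\<integral>S. (?Y S)\<^sup>2 + v \<partial>?P)"
    by (subst Pi_pmf_step[OF fin]) (simp add: sum_upd_Suc i2)
  have A4: "(\<integral>S. (\<Sum>i<Suc m. z (S i))^4 \<partial>Pi_pmf {..<Suc m} d (\<lambda>_. D)) =
      (\<integral>S. (?Y S)^4 + 6 * v * (?Y S)\<^sup>2 + 4 * (\<integral>y. (z y)^3 \<partial>D) * ?Y S + (\<integral>y. (z y)^4 \<partial>D) \<partial>?P)"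
    by (subst Pi_pmf_step[OF fin], intro Bochner_Integration.integral_cong refl) (simp add: sum_upd_Suc i4 mult_ac)
  have B2: "(\<integral>S. (?Y S)\<^sup>2 + v \<partial>?P) = real m * v + v"
    using m2 by (simp add: integral_add intP)
  have B4: "(\<integral>S. (?Y S)^4 + 6 * v * (?Y S)\<^sup>2 + 4 * (\<integral>y. (z y)^3 \<partial>D) * ?Y S + (\<integral>y. (z y)^4 \<partial>D) \<partial>?P)
     = (\<integral>S. (?Y S)^4 \<partial>?P) + 6 * v * (real m * v) + (\<integral>y. (z y)^4 \<partial>D)"
    using m1 m2 by (simp add: integral_add intP)
  have C1: "3 * (real (Suc m))\<^sup>2 * v\<^sup>2 = 3 * (real m)\<^sup>2 * v\<^sup>2 + 6 * (v * (real m * v)) + 3 * v\<^sup>2"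
    by (simp add: algebra_simps power2_eq_square)
  have C2: "v\<^sup>2 \<ge> 0" by simp
  have C3: "real (Suc m) * v = real m * v + v" by (simp add: algebra_simps)
  show ?case
    unfolding A1 A2 A4 B2 B4 C1 C3 using m1 m4 z4 C2 by linarith
qed


lemma abs_pointwise:
  fixes y t :: real assumes "t > 0"
  shows "\<bar>y\<bar> \<ge> 3 / (2*t) * y\<^sup>2 - 1 / (2*t^3) * y^4"
proof -
  define a where "a = \<bar>y\<bar>"
  have a0: "a \<ge> 0" unfolding a_def by simp
  have y2: "y\<^sup>2 = a\<^sup>2" and y4: "y^4 = a^4" unfolding a_def by (simp_all add: power_even_abs)
  have "a * (a - t)\<^sup>2 * (a + 2*t) \<ge> 0" using a0 assms by simp
  hence "2*t^3*a \<ge> 3*t\<^sup>2*a\<^sup>2 - a^4" by (simp add: algebra_simps power2_eq_square power3_eq_cube eval_nat_numeral)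
  hence "(3*t\<^sup>2*a\<^sup>2 - a^4) / (2*t^3) \<le> a" using assms by (simp add: divide_le_eq mult.commute)
  moreover have "(3*t\<^sup>2*a\<^sup>2 - a^4) / (2*t^3) = 3 / (2*t) * a\<^sup>2 - 1 / (2*t^3) * a^4"
    using assms by (simp add: field_simps power2_eq_square power3_eq_cube eval_nat_numeral)
  ultimately show ?thesis unfolding y2 y4 a_def by simp
qed

lemma abs_lower:
  fixes Y :: "'a \<Rightarrow> real"
  assumes "finite (set_pmf P)" "t > 0"
  shows "(\<integral>S. \<bar>Y S\<bar> \<partial>P) \<ge> 3 / (2*t) * (\<integral>S. (Y S)\<^sup>2 \<partial>P) - 1 / (2*t^3) * (\<integral>S. (Y S)^4 \<partial>P)"
proof -
  have "(\<integral>S. 3 / (2*t) * (Y S)\<^sup>2 - 1 / (2*t^3) * (Y S)^4 \<partial>P) \<le> (\<integral>S. \<bar>Y S\<bar> \<partial>P)"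
    using assms abs_pointwise by (intro integral_mono integrable_measure_pmf_finite) auto
  then show ?thesis using assms by (simp add: integral_diff integrable_measure_pmf_finite)
qed


lemma sum_upd_i:
  fixes g :: "'a \<Rightarrow> real" and m :: nat
  assumes "i < m"
  shows "(\<Sum>j<m. g ((S(i:=y)) j)) = (\<Sum>j<m. g (S j)) - g (S i) + g y"
proof -
  have "(\<Sum>j<m. g ((S(i:=y)) j)) = g y + (\<Sum>j\<in>{..<m}-{i}. g ((S(i:=y)) j))"
    using assms by (subst sum.remove[of _ i]) auto
  also have "(\<Sum>j\<in>{..<m}-{i}. g ((S(i:=y)) j)) = (\<Sum>j\<in>{..<m}-{i}. g (S j))"
    by (intro sum.cong) auto
  also have "\<dots> = (\<Sum>j<m. g (S j)) - g (S i)"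
    using assms by (subst sum.remove[of _ i]) auto
  finally show ?thesis by simp
qed

lemma card_as_sum:
  "real (card {j\<in>{..<m::nat}. S j = x}) = (\<Sum>j<m. if S j = x then 1 else 0)"
  by (simp add: sum.If_cases Int_def)

definition zz :: "nat \<Rightarrow> 'b \<Rightarrow> 'b \<Rightarrow> real" where
  "zz N x y = (if y = x then 1 else 0) - 1 / real N"

lemma emp_eq:
  assumes "finite T" "T \<noteq> {}" "m > 0" "x \<in> T"
  shows "emp m S x - pmf (pmf_of_set T) x = (\<Sum>j<m. zz (card T) x (S j)) / real m"
proof -
  have "(\<Sum>j<m. zz (card T) x (S j)) = (\<Sum>j<m. if S j = x then 1 else 0) - real m / real (card T)"
    by (simp add: zz_def sum_subtractf)
  moreover have "emp m S x = (\<Sum>j<m. if S j = x then 1 else 0) / real m"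
    unfolding emp_def card_as_sum ..
  moreover have "pmf (pmf_of_set T) x = 1 / real (card T)" using assms by simp
  ultimately show ?thesis using assms by (simp add: field_simps)
qed

lemma f_eq:
  assumes "finite T" "T \<noteq> {}" "m > 0"
  shows "tv_dist T (emp m S) (pmf (pmf_of_set T)) = (1 / (2 * real m)) * (\<Sum>x\<in>T. \<bar>\<Sum>j<m. zz (card T) x (S j)\<bar>)"
proof -
  have "(\<Sum>x\<in>T. \<bar>emp m S x - pmf (pmf_of_set T) x\<bar>) = (\<Sum>x\<in>T. \<bar>\<Sum>j<m. zz (card T) x (S j)\<bar> / real m)"
  proof (intro sum.cong refl)
    fix x assume x: "x \<in> T"
    have e: "emp m S x - pmf (pmf_of_set T) x = (\<Sum>j<m. zz (card T) x (S j)) / real m"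
      by (rule emp_eq[OF assms x])
    show "\<bar>emp m S x - pmf (pmf_of_set T) x\<bar> = \<bar>\<Sum>j<m. zz (card T) x (S j)\<bar> / real m"
      by (simp only: e abs_divide)
  qed
  then show ?thesis unfolding tv_dist_def by (simp add: sum_divide_distrib mult.commute)
qed


lemma sum_ind_le1: "finite T \<Longrightarrow> (\<Sum>x\<in>T. (if y = x then 1 else 0 :: real)) \<le> 1"
  by (simp add: sum.delta)

lemma F_bd:
  fixes T :: "'b set"
  assumes "finite T" "T \<noteq> {}" "m > 0" "i < m"
  shows "\<bar>(1 / (2 * real m)) * (\<Sum>x\<in>T. \<bar>\<Sum>j<m. zz (card T) x ((S(i:=y)) j)\<bar>)
        - (1 / (2 * real m)) * (\<Sum>x\<in>T. \<bar>\<Sum>j<m. zz (card T) x (S j)\<bar>)\<bar> \<le> 1 / real m"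
proof -
  let ?A = "\<lambda>x. \<Sum>j<m. zz (card T) x (S j)"
  let ?d = "\<lambda>x. (if y = x then 1 else 0) - (if S i = x then 1 else 0) :: real"
  have e: "(\<Sum>j<m. zz (card T) x ((S(i:=y)) j)) = ?A x + ?d x" for x
  proof -
    have "(\<Sum>j<m. zz (card T) x ((S(i:=y)) j)) = (\<Sum>j<m. zz (card T) x (S j)) - zz (card T) x (S i) + zz (card T) x y"
      by (rule sum_upd_i[OF assms(4)])
    then show ?thesis by (simp add: zz_def)
  qed
  have "\<bar>(\<Sum>x\<in>T. \<bar>?A x + ?d x\<bar>) - (\<Sum>x\<in>T. \<bar>?A x\<bar>)\<bar> = \<bar>\<Sum>x\<in>T. (\<bar>?A x + ?d x\<bar> - \<bar>?A x\<bar>)\<bar>"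
    by (simp add: sum_subtractf)
  also have "\<dots> \<le> (\<Sum>x\<in>T. \<bar>\<bar>?A x + ?d x\<bar> - \<bar>?A x\<bar>\<bar>)" by (rule sum_abs)
  also have "\<dots> \<le> (\<Sum>x\<in>T. (if y = x then 1 else 0) + (if S i = x then 1 else 0))"
    by (intro sum_mono) auto
  also have "\<dots> \<le> 2"
    using sum_ind_le1[OF assms(1), of y] sum_ind_le1[OF assms(1), of "S i"] by (simp add: sum.distrib)
  finally have h: "\<bar>(\<Sum>x\<in>T. \<bar>?A x + ?d x\<bar>) - (\<Sum>x\<in>T. \<bar>?A x\<bar>)\<bar> \<le> 2" .
  have "\<bar>(1 / (2 * real m)) * (\<Sum>x\<in>T. \<bar>?A x + ?d x\<bar>) - (1 / (2 * real m)) * (\<Sum>x\<in>T. \<bar>?A x\<bar>)\<bar>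
     = (1 / (2 * real m)) * \<bar>(\<Sum>x\<in>T. \<bar>?A x + ?d x\<bar>) - (\<Sum>x\<in>T. \<bar>?A x\<bar>)\<bar>"
    using assms by (simp add: diff_divide_distrib[symmetric] abs_divide)
  also have "\<dots> \<le> (1 / (2 * real m)) * 2"
    using h assms by (intro mult_left_mono) auto
  finally show ?thesis unfolding e using assms by simp
qed

lemma zz_moments:
  fixes T :: "'b set"
  assumes "finite T" "T \<noteq> {}" "x \<in> T"
  shows "(\<integral>y. zz (card T) x y \<partial>pmf_of_set T) = 0"
    and "(\<integral>y. (zz (card T) x y)\<^sup>2 \<partial>pmf_of_set T) = (real (card T) - 1) / (real (card T))\<^sup>2"
    and "(\<integral>y. (zz (card T) x y)^4 \<partial>pmf_of_set T) \<le> (\<integral>y. (zz (card T) x y)\<^sup>2 \<partial>pmf_of_set T)"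
proof -
  let ?N = "real (card T)"
  have N0: "?N > 0" using assms by (simp add: card_gt_0_iff)
  have s1: "(\<Sum>y\<in>T. (if y = x then 1 else 0 :: real)) = 1" using assms by (simp add: sum.delta')
  show "(\<integral>y. zz (card T) x y \<partial>pmf_of_set T) = 0"
    using assms s1 N0 by (simp add: integral_pmf_of_set zz_def sum_subtractf)
  have sq: "(zz (card T) x y)\<^sup>2 = (if y = x then 1 else 0) * (1 - 2 / ?N) + 1 / ?N\<^sup>2" for y
    using N0 by (cases "y = x") (simp_all add: zz_def power2_eq_square field_simps)
  show "(\<integral>y. (zz (card T) x y)\<^sup>2 \<partial>pmf_of_set T) = (?N - 1) / ?N\<^sup>2"
  proof -
    have "(\<Sum>y\<in>T. (if y = x then 1 else 0) * (1 - 2 / ?N) + 1 / ?N\<^sup>2) = (1 - 2 / ?N) + ?N / ?N\<^sup>2"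
      by (simp add: sum.distrib sum_distrib_right[symmetric] s1)
    moreover have "(\<integral>y. (zz (card T) x y)\<^sup>2 \<partial>pmf_of_set T) = (\<Sum>y\<in>T. (if y = x then 1 else 0) * (1 - 2 / ?N) + 1 / ?N\<^sup>2) / ?N"
      unfolding sq by (rule integral_pmf_of_set[OF assms(2,1)])
    ultimately show ?thesis using N0
      by (simp add: field_simps power2_eq_square)
  qed
  have b: "\<bar>zz (card T) x y\<bar> \<le> 1" for y
  proof -
    have "1 / ?N \<le> 1" using N0 assms
      by (simp add: divide_le_eq)
    then show ?thesis using N0 by (auto simp: zz_def)
  qed
  have "(zz (card T) x y)^4 \<le> (zz (card T) x y)\<^sup>2" for y
  proof -
    have "(zz (card T) x y)\<^sup>2 \<le> 1" using b[of y] by (simp add: abs_square_le_1)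
    then have "(zz (card T) x y)\<^sup>2 * (zz (card T) x y)\<^sup>2 \<le> 1 * (zz (card T) x y)\<^sup>2"
      by (intro mult_right_mono) auto
    then show ?thesis by (simp add: power2_eq_square eval_nat_numeral mult.assoc)
  qed
  then show "(\<integral>y. (zz (card T) x y)^4 \<partial>pmf_of_set T) \<le> (\<integral>y. (zz (card T) x y)\<^sup>2 \<partial>pmf_of_set T)"
    using assms by (intro integral_mono integrable_measure_pmf_finite) auto
qed


lemma set_Pi_memb:
  assumes "finite T" "T \<noteq> {}" "S \<in> set_pmf (Pi_pmf {..<m::nat} d (\<lambda>_. pmf_of_set T))" "i < m"
  shows "S i \<in> T"
proof -
  have "set_pmf (Pi_pmf {..<m} d (\<lambda>_. pmf_of_set T)) = PiE_dflt {..<m} d (set_pmf \<circ> (\<lambda>_. pmf_of_set T))"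
    by (rule set_Pi_pmf) simp
  then show ?thesis using assms by (auto simp: PiE_dflt_def)
qed

lemma small_case:
  fixes T :: "'b set" and S :: "nat \<Rightarrow> 'b"
  assumes "finite T" "T \<noteq> {}" "m > 0" "2 * m < card T" and ST: "\<forall>i<m. S i \<in> T"
  shows "(1 / (2 * real m)) * (\<Sum>x\<in>T. \<bar>\<Sum>j<m. zz (card T) x (S j)\<bar>) > 1/2"
proof -
  let ?N = "real (card T)"
  define cc where "cc x = (\<Sum>j<m. if S j = x then 1 else 0 :: real)" for x
  have Y: "(\<Sum>j<m. zz (card T) x (S j)) = cc x - real m / ?N" for x
    by (simp add: zz_def cc_def sum_subtractf)
  define R where "R = T \<inter> S ` {..<m}"
  have R: "R \<subseteq> T" "finite R" using assms(1) unfolding R_def by auto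
  have cardR: "card R \<le> m"
  proof -
    have "card R \<le> card (S ` {..<m})" unfolding R_def by (intro card_mono) auto
    also have "\<dots> \<le> m" using card_image_le[of "{..<m}" S] by simp
    finally show ?thesis .
  qed
  have c0: "cc x = 0" if "x \<in> T - R" for x
    using that unfolding cc_def R_def by (intro sum.neutral) auto
  have sumT: "(\<Sum>x\<in>T. cc x) = real m"
  proof -
    have "(\<Sum>x\<in>T. cc x) = (\<Sum>j<m. \<Sum>x\<in>T. if S j = x then 1 else 0)"
      unfolding cc_def by (rule sum.swap)
    also have "\<dots> = (\<Sum>j<m. 1)" using ST assms(1) by (intro sum.cong refl) (simp add: sum.delta)
    finally show ?thesis by simp
  qed
  have sumR: "(\<Sum>x\<in>R. cc x) = real m"
  proof -
    have "(\<Sum>x\<in>R. cc x) = (\<Sum>x\<in>T. cc x)"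
      using R c0 assms(1) by (intro sum.mono_neutral_left) auto
    then show ?thesis using sumT by simp
  qed
  have "(\<Sum>x\<in>T. \<bar>cc x - real m / ?N\<bar>) = (\<Sum>x\<in>R. \<bar>cc x - real m / ?N\<bar>) + (\<Sum>x\<in>T-R. \<bar>cc x - real m / ?N\<bar>)"
    using R assms(1) by (metis add.commute sum.subset_diff)
  also have "(\<Sum>x\<in>T-R. \<bar>cc x - real m / ?N\<bar>) = (\<Sum>x\<in>T-R. real m / ?N)"
    using c0 by (intro sum.cong refl) simp
  also have "\<dots> = (?N - real (card R)) * (real m / ?N)"
    using R assms(1) by (simp add: card_Diff_subset of_nat_diff card_mono)
  also have "(\<Sum>x\<in>R. \<bar>cc x - real m / ?N\<bar>) \<ge> (\<Sum>x\<in>R. cc x - real m / ?N)"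
    by (intro sum_mono) simp
  moreover have "(\<Sum>x\<in>R. cc x - real m / ?N) = real m - real (card R) * (real m / ?N)"
    using sumR by (simp add: sum_subtractf)
  ultimately have "(\<Sum>x\<in>T. \<bar>cc x - real m / ?N\<bar>) \<ge> real m - real (card R) * (real m / ?N) + (?N - real (card R)) * (real m / ?N)"
    by linarith
  moreover have "real (card R) * (real m / ?N) \<le> real m * (real m / ?N)"
    using cardR by (intro mult_right_mono) auto
  moreover have "(?N - real (card R)) * (real m / ?N) = real m - real (card R) * (real m / ?N)"
    using assms by (simp add: field_simps)
  ultimately have h: "(\<Sum>x\<in>T. \<bar>cc x - real m / ?N\<bar>) \<ge> 2 * real m - 2 * real m * (real m / ?N)"
    by linarith
  have mN: "real m / ?N < 1/2" using assms(3,4) by (simp add: divide_less_eq)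
  have "(1 / (2 * real m)) * (2 * real m - 2 * real m * (real m / ?N)) = 1 - real m / ?N"
    using assms(3) by (simp add: field_simps)
  moreover have "(1 / (2 * real m)) * (2 * real m - 2 * real m * (real m / ?N)) \<le> (1 / (2 * real m)) * (\<Sum>x\<in>T. \<bar>cc x - real m / ?N\<bar>)"
    using h assms(3) by (intro mult_left_mono) auto
  ultimately show ?thesis unfolding Y using mN by linarith
qed

lemma arith1:
  fixes \<sigma> :: real
  assumes "\<sigma> > 0" "\<sigma>\<^sup>2 \<ge> (497/1000)"
  shows "3 / (2 * (9/4 * \<sigma>)) * \<sigma>\<^sup>2 - 1 / (2 * (9/4 * \<sigma>)^3) * (\<sigma>\<^sup>2 + 3 * (\<sigma>\<^sup>2)\<^sup>2) \<ge> (44/100) * \<sigma>"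
proof -
  have e: "3 / (2 * (9/4 * \<sigma>)) * \<sigma>\<^sup>2 - 1 / (2 * (9/4 * \<sigma>)^3) * (\<sigma>\<^sup>2 + 3 * (\<sigma>\<^sup>2)\<^sup>2)
      = 2/3 * \<sigma> - 32 * (1 + 3 * \<sigma>\<^sup>2) / (729 * \<sigma>)"
    using assms(1) by (simp add: field_simps power2_eq_square eval_nat_numeral)
  have "32 * (1 + 3 * \<sigma>\<^sup>2) \<le> (2/3 - (44/100)) * \<sigma> * (729 * \<sigma>)"
    using assms(2) by (simp add: power2_eq_square algebra_simps)
  then have "32 * (1 + 3 * \<sigma>\<^sup>2) / (729 * \<sigma>) \<le> (2/3 - (44/100)) * \<sigma>"
    using assms(1) by (simp add: divide_le_eq)
  moreover have "(2/3 - (44/100)) * \<sigma> = 2/3 * \<sigma> - (44/100) * \<sigma>" by (rule left_diff_distrib)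
  ultimately show ?thesis unfolding e by linarith
qed

lemma large_case:
  fixes T :: "'b set" and eps c :: real
  assumes fin: "finite T" and ne: "T \<noteq> {}" and N201: "card T \<ge> 201" and m0: "m > 0"
    and big: "card T \<le> 2 * m" and c: "c < 0.017" and eps: "0 < eps"
    and mc: "real m < c * real (card T) / eps\<^sup>2"
  shows "measure_pmf.prob (Pi_pmf {..<m} d (\<lambda>_. pmf_of_set T))
           {S. (1 / (2 * real m)) * (\<Sum>x\<in>T. \<bar>\<Sum>j<m. zz (card T) x (S j)\<bar>) > eps}
         \<ge> 1 - 200 / real (card T)"
proof -
  let ?D = "pmf_of_set T"
  let ?P = "Pi_pmf {..<m} d (\<lambda>_. ?D)"
  let ?N = "real (card T)"
  define Y where "Y (x::'b) (S::nat \<Rightarrow> 'b) = (\<Sum>j<m. zz (card T) x (S j))" for x S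
  define F where "F S = (1 / (2 * real m)) * (\<Sum>x\<in>T. \<bar>Y x S\<bar>)" for S
  have finD: "finite (set_pmf ?D)" using fin ne by simp
  have finP: "finite (set_pmf ?P)" by (rule fin_Pi_pmf[OF finD])
  have intP: "integrable ?P h" for h :: "(nat \<Rightarrow> 'b) \<Rightarrow> real"
    by (rule integrable_measure_pmf_finite[OF finP])
  have N0: "?N \<ge> 201" using N201 by simp
  define v where "v = (?N - 1) / ?N\<^sup>2"
  define s2 where "s2 = real m * v"
  define \<sigma> where "\<sigma> = sqrt s2"
  have s2b: "s2 \<ge> (497/1000)"
  proof -
    have "real m * (?N - 1) \<ge> ?N / 2 * (?N - 1)"
      using big N0 by (intro mult_right_mono) auto
    moreover have "?N / 2 * (?N - 1) \<ge> (497/1000) * ?N\<^sup>2"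
    proof -
      have "1 * ?N \<le> ((6/1000) * ?N) * ?N" using N0 by (intro mult_right_mono) auto
      then have "?N \<le> (6/1000) * (?N * ?N)" by (simp only: mult.assoc mult_1)
      moreover have "?N / 2 * (?N - 1) = 0.5 * (?N * ?N) - 0.5 * ?N" by (simp add: field_simps)
      moreover have "(497/1000) * ?N\<^sup>2 = (497/1000) * (?N * ?N)" by (simp add: power2_eq_square)
      ultimately show ?thesis by (simp add: power2_eq_square; linarith?)
    qed
    ultimately have "real m * (?N - 1) \<ge> (497/1000) * ?N\<^sup>2" by linarith
    then show ?thesis using N0 unfolding s2_def v_def by (simp add: le_divide_eq)
  qed
  have \<sigma>0: "\<sigma> > 0" unfolding \<sigma>_def using s2b by simp
  have \<sigma>2: "\<sigma>\<^sup>2 = s2" unfolding \<sigma>_def using s2b by simp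
  have absY: "(\<integral>S. \<bar>Y x S\<bar> \<partial>?P) \<ge> (44/100) * \<sigma>" if x: "x \<in> T" for x
  proof -
    note zm = zz_moments[OF fin ne x]
    have mom: "(\<integral>S. (Y x S)\<^sup>2 \<partial>?P) = s2 \<and> (\<integral>S. (Y x S)^4 \<partial>?P) \<le> s2 + 3 * s2\<^sup>2"
    proof -
      have M: "(\<integral>S. (\<Sum>i<m. zz (card T) x (S i)) \<partial>?P) = 0 \<and>
         (\<integral>S. (\<Sum>i<m. zz (card T) x (S i))\<^sup>2 \<partial>?P) = real m * v \<and>
         (\<integral>S. (\<Sum>i<m. zz (card T) x (S i))^4 \<partial>?P) \<le> real m * v + 3 * (real m)\<^sup>2 * v\<^sup>2"
        using moments[OF finD zm(1) zm(2)[folded v_def] zm(3)[unfolded zm(2), folded v_def], of m d] .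
      have "3 * (real m)\<^sup>2 * v\<^sup>2 = 3 * s2\<^sup>2" unfolding s2_def by (simp add: power_mult_distrib)
      then show ?thesis using M unfolding Y_def s2_def by simp
    qed
    define t where "t = 9/4 * \<sigma>"
    have t0: "t > 0" unfolding t_def using \<sigma>0 by simp
    have "(\<integral>S. \<bar>Y x S\<bar> \<partial>?P) \<ge> 3 / (2*t) * s2 - 1 / (2*t^3) * (\<integral>S. (Y x S)^4 \<partial>?P)"
      using abs_lower[OF finP t0, of "Y x"] conjunct1[OF mom] by simp
    moreover have "1 / (2*t^3) * (\<integral>S. (Y x S)^4 \<partial>?P) \<le> 1 / (2*t^3) * (s2 + 3 * s2\<^sup>2)"
      using mom t0 by (intro mult_left_mono) auto
    moreover have "3 / (2*t) * s2 - 1 / (2*t^3) * (s2 + 3 * s2\<^sup>2) \<ge> (44/100) * \<sigma>"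
      using arith1[OF \<sigma>0] s2b unfolding t_def \<sigma>2 by simp
    ultimately show ?thesis using mom by linarith
  qed
  define \<mu> where "\<mu> = (\<integral>S. F S \<partial>?P)"
  have mu_eq: "\<mu> = (1 / (2 * real m)) * (\<Sum>x\<in>T. (\<integral>S. \<bar>Y x S\<bar> \<partial>?P))"
    unfolding \<mu>_def F_def by (simp add: integral_sum intP)
  have "(\<Sum>x\<in>T. (\<integral>S. \<bar>Y x S\<bar> \<partial>?P)) \<ge> (\<Sum>x\<in>T. (44/100) * \<sigma>)"
    using absY by (intro sum_mono) auto
  then have mu_ge: "\<mu> \<ge> (1 / (2 * real m)) * (?N * ((44/100) * \<sigma>))"
    unfolding mu_eq using m0 by (intro mult_left_mono) auto
  define w where "w = sqrt (?N / real m)"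
  have w0: "w > 0" unfolding w_def using N0 m0 by simp
  have w2: "w\<^sup>2 = ?N / real m" unfolding w_def using N0 m0 by simp
  have u_ge: "(21/100) * w \<le> (1 / (2 * real m)) * (?N * ((44/100) * \<sigma>))"
  proof (rule power2_le_imp_le)
    have "((1 / (2 * real m)) * (?N * ((44/100) * \<sigma>)))\<^sup>2 = (484/10000) * (?N - 1) / real m"
      using m0 N0 unfolding power_mult_distrib \<sigma>2 s2_def v_def
      by (simp add: field_simps power2_eq_square)
    moreover have "((21/100) * w)\<^sup>2 = (441/10000) * ?N / real m" unfolding power_mult_distrib w2 by (simp add: power2_eq_square)
    moreover have "(441/10000) * ?N / real m \<le> (484/10000) * (?N - 1) / real m"
      using m0 N0 by (intro divide_right_mono) auto
    ultimately show "((21/100) * w)\<^sup>2 \<le> ((1 / (2 * real m)) * (?N * ((44/100) * \<sigma>)))\<^sup>2" by simp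
    show "0 \<le> (1 / (2 * real m)) * (?N * ((44/100) * \<sigma>))" using \<sigma>0 by simp
  qed
  have eps_lt: "eps < (131/1000) * w"
  proof (rule power_less_imp_less_base[of _ 2])
    have "real m * eps\<^sup>2 < c * ?N" using mc eps by (simp add: less_divide_eq)
    then have "eps\<^sup>2 < c * ?N / real m" using m0 by (simp add: less_divide_eq mult.commute)
    also have "\<dots> \<le> (17161/1000000) * ?N / real m" using c m0 by (intro divide_right_mono mult_right_mono) auto
    also have "\<dots> = ((131/1000) * w)\<^sup>2" unfolding power_mult_distrib w2 by (simp add: power2_eq_square)
    finally show "eps ^ 2 < ((131/1000) * w) ^ 2" .
    show "0 \<le> (131/1000) * w" using w0 by simp
  qed
  define a where "a = (79/1000) * w"
  have a0: "a > 0" unfolding a_def using w0 by simp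
  have gap: "\<mu> - eps \<ge> a" using mu_ge u_ge eps_lt unfolding a_def by linarith
  have var: "(\<integral>S. (F S - \<mu>)\<^sup>2 \<partial>?P) \<le> 1 / real m"
  proof -
    have "(\<integral>S. (F S - \<mu>)\<^sup>2 \<partial>?P) \<le> real m * (1 / real m)\<^sup>2"
      unfolding \<mu>_def
    proof (rule var_bound[OF finD])
      show "0 \<le> 1 / real m" by simp
      show "\<forall>S i y. i < m \<longrightarrow> \<bar>F (S(i := y)) - F S\<bar> \<le> 1 / real m"
        unfolding F_def Y_def using F_bd[OF fin ne m0] by blast
    qed
    then show ?thesis using m0 by (simp add: power2_eq_square)
  qed
  define B where "B = {S \<in> space (measure_pmf ?P). a \<le> \<bar>F S - \<mu>\<bar>}"
  have cheb: "measure_pmf.prob ?P B \<le> (\<integral>S. (F S - \<mu>)\<^sup>2 \<partial>?P) / a\<^sup>2"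
    unfolding B_def \<mu>_def
    by (rule measure_pmf.Chebyshev_inequality) (auto simp: intP a0)
  have "(\<integral>S. (F S - \<mu>)\<^sup>2 \<partial>?P) / a\<^sup>2 \<le> (1 / real m) / a\<^sup>2"
    using var a0 by (intro divide_right_mono) auto
  also have "(1 / real m) / a\<^sup>2 = 1 / ((6241/1000000) * ?N)"
    unfolding a_def power_mult_distrib w2 using m0 N0 by (simp add: field_simps)
  also have "\<dots> \<le> 200 / ?N" using N0 by (simp add: field_simps)
  finally have pB: "measure_pmf.prob ?P B \<le> 200 / ?N" using cheb by linarith
  have sub: "space (measure_pmf ?P) - B \<subseteq> {S. F S > eps}"
    using gap unfolding B_def by auto
  have "1 - measure_pmf.prob ?P B = measure_pmf.prob ?P (space (measure_pmf ?P) - B)"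
    by (rule measure_pmf.prob_compl[symmetric]) simp
  also have "\<dots> \<le> measure_pmf.prob ?P {S. F S > eps}"
    using sub by (intro measure_pmf.finite_measure_mono) auto
  finally show ?thesis unfolding F_def Y_def using pB by linarith
qed


theorem theorem1:
  fixes c :: real
  assumes "0 < c" and "c < 0.017"
  shows "\<exists>C::real. C > 0 \<and>
    (\<forall>(n::nat) (k::nat) (Ts::nat \<Rightarrow> nat set) (\<epsilon>::real) (m::nat).
      n \<ge> 1 \<longrightarrow> k \<ge> 2 \<longrightarrow> (\<forall>j<n. card (Ts j) = k) \<longrightarrow>
      0 < \<epsilon> \<longrightarrow> \<epsilon> \<le> 1/2 \<longrightarrow> 0 < m \<longrightarrow>
      real m < c * real k ^ n / \<epsilon>^2 \<longrightarrow>
      (let T = PiE {..<n} Ts; D = pmf_of_set T in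
        measure_pmf.prob (Pi_pmf {..<m} undefined (\<lambda>_. D))
          {S. tv_dist T (emp m S) (pmf D) > \<epsilon>}
        \<ge> 1 - C / real k ^ n))"
proof (intro exI[of _ 200] conjI allI impI)
  fix n k :: nat and Ts :: "nat \<Rightarrow> nat set" and eps :: real and m :: nat
  assume n1: "n \<ge> 1" and k2: "k \<ge> 2" and cardTs: "\<forall>j<n. card (Ts j) = k"
    and eps0: "0 < eps" and eps1: "eps \<le> 1/2" and m0: "0 < m"
    and mc: "real m < c * real k ^ n / eps^2"
  define T where "T = PiE {..<n} Ts"
  have finTs: "finite (Ts j)" if "j < n" for j
    using cardTs that k2 by (metis card.infinite not_numeral_le_zero)
  have cardT: "card T = k ^ n"
    unfolding T_def using cardTs finTs by (simp add: card_PiE)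
  have finT: "finite T" unfolding T_def using finTs by (intro finite_PiE) auto
  have kn: "real (card T) = real k ^ n" using cardT by simp
  have neT: "T \<noteq> {}" using cardT k2 by (metis card.empty less_le_trans nat_zero_less_power_iff pos2 zero_less_iff_neq_zero less_numeral_extra(3) )
  let ?P = "Pi_pmf {..<m} undefined (\<lambda>_. pmf_of_set T)"
  let ?F = "\<lambda>S. (1 / (2 * real m)) * (\<Sum>x\<in>T. \<bar>\<Sum>j<m. zz (card T) x (S j)\<bar>)"
  have ev: "{S. tv_dist T (emp m S) (pmf (pmf_of_set T)) > eps} = {S. ?F S > eps}"
    using f_eq[OF finT neT m0] by simp
  have goal: "measure_pmf.prob ?P {S. ?F S > eps} \<ge> 1 - 200 / real (card T)"
  proof (cases "card T \<le> 200")
    case True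
    have "real (card T) > 0" using finT neT by (simp add: card_gt_0_iff)
    then have "1 - 200 / real (card T) \<le> 0" using True by (simp add: field_simps)
    then show ?thesis by (meson measure_nonneg order_trans)
  next
    case False
    show ?thesis
    proof (cases "2 * m < card T")
      case True
      have "measure_pmf.prob ?P {S. ?F S > eps} = 1"
      proof (subst measure_pmf.prob_eq_1)
        show "AE S in measure_pmf ?P. S \<in> {S. ?F S > eps}"
          unfolding AE_measure_pmf_iff
        proof
          fix S assume S: "S \<in> set_pmf ?P"
          have "\<forall>i<m. S i \<in> T" using set_Pi_memb[OF finT neT S] by blast
          then have "?F S > 1/2" using small_case[OF finT neT m0 True] by blast
          then show "S \<in> {S. ?F S > eps}" using eps1 by simp
        qed
      qed simp
      then show ?thesis by (simp add: finT)
    next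
      case False2: False
      show ?thesis
        using large_case[OF finT neT _ m0 _ assms(2) eps0, of undefined] False False2 mc kn by simp
    qed
  qed
  show "let T = PiE {..<n} Ts; D = pmf_of_set T in
        measure_pmf.prob (Pi_pmf {..<m} undefined (\<lambda>_. D))
          {S. tv_dist T (emp m S) (pmf D) > eps}
        \<ge> 1 - 200 / real k ^ n"
    using goal unfolding Let_def T_def[symmetric] ev kn .
qed simp

end
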